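(* Let $R$ be a commutative ring with identity and $M$ an $R$-module; for $a\in R$ let $\mathfrak{a}=aR$. The following statements are equivalent: (1) $M$ is reduced; (2) $a\Gamma_{a}(M)=0$ for all $a\in R$; (3) $(0:_M a)=(0:_M a^{k})$ for all $a\in R$ and all $k\in\mathbb{Z}^{+}$; (4) $\varinjlim_{k}\operatorname{Hom}_R(R/\mathfrak{a}^{k},M)\cong \operatorname{Hom}_R(R/\mathfrak{a},M)$ for all $a\in R$; (5) $\Gamma_{a}(M)\cong \operatorname{Hom}_R(R/\mathfrak{a},M)$ for all $a\in R$; (6) for all $a\in R$, $0\to \Gamma_{a}(M)\to M\to aM\to 0$ is a short exact sequence, where the first map is the inclusion and the second is $m\mapsto am$.
   Context: All rings are commutative with identity. For an $R$-module $M$ and $a\in R$: $M$ is $a$-reduced if for all $m\in M$, $a^{2}m=0$ implies $am=0$; $M$ is reduced if it is $a$-reduced for every $a\in R$. $\Gamma_{a}(M)=\{m\in M \mid a^{k}m=0 \text{ for some } k\in\mathbb{Z}^{+}\}$, $a\Gamma_{a}(M)=\{am \mid m\in \Gamma_a(M)\}$, and $(0:_M a^{k})=\{m\in M\mid a^{k}m=0\}$. *)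

theory Defs
  imports Complex_Main
begin

text \<open>R is the whole type 'a :: comm_ring_1, M the whole type 'm :: ab_group_add with an
  R-module scalar multiplication scale (Main's locale module).\<close>

definition a_reduced :: "('a::comm_ring_1 \<Rightarrow> 'm::ab_group_add \<Rightarrow> 'm) \<Rightarrow> 'a \<Rightarrow> bool" where
  "a_reduced scale a \<longleftrightarrow> (\<forall>m. scale (a^2) m = 0 \<longrightarrow> scale a m = 0)"

definition reduced :: "('a::comm_ring_1 \<Rightarrow> 'm::ab_group_add \<Rightarrow> 'm) \<Rightarrow> bool" where
  "reduced scale \<longleftrightarrow> (\<forall>a. a_reduced scale a)"

definition Gamma :: "('a::comm_ring_1 \<Rightarrow> 'm::ab_group_add \<Rightarrow> 'm) \<Rightarrow> 'a \<Rightarrow> 'm set" where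
  "Gamma scale a = {m. \<exists>k::nat. k > 0 \<and> scale (a^k) m = 0}"

definition ann :: "('a::comm_ring_1 \<Rightarrow> 'm::ab_group_add \<Rightarrow> 'm) \<Rightarrow> 'a \<Rightarrow> 'm set" where
  "ann scale b = {m. scale b m = 0}"

definition smul_set :: "('a::comm_ring_1 \<Rightarrow> 'm::ab_group_add \<Rightarrow> 'm) \<Rightarrow> 'a \<Rightarrow> 'm set \<Rightarrow> 'm set" where
  "smul_set scale b N = {scale b n | n. n \<in> N}"

definition pideal :: "'a::comm_ring_1 \<Rightarrow> 'a set" where
  "pideal b = {b * r | r. True}"

text \<open>Hom_R(R/I, M), realised (via the universal property of the quotient R -> R/I) as the
  R-linear maps R -> M vanishing on I; module operations are pointwise.\<close>
definition HomQ :: "('a::comm_ring_1 \<Rightarrow> 'm::ab_group_add \<Rightarrow> 'm) \<Rightarrow> 'a set \<Rightarrow> ('a \<Rightarrow> 'm) set" where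
  "HomQ scale I = {f. module_hom ((*)) scale f \<and> (\<forall>x\<in>I. f x = 0)}"

definition hom_add :: "('a \<Rightarrow> 'm::ab_group_add) \<Rightarrow> ('a \<Rightarrow> 'm) \<Rightarrow> ('a \<Rightarrow> 'm)" where
  "hom_add f g = (\<lambda>x. f x + g x)"

definition hom_scale :: "('r \<Rightarrow> 'm \<Rightarrow> 'm) \<Rightarrow> 'r \<Rightarrow> ('a \<Rightarrow> 'm) \<Rightarrow> ('a \<Rightarrow> 'm)" where
  "hom_scale scale r f = (\<lambda>x. scale r (f x))"

definition mod_iso ::
  "('b \<Rightarrow> 'b \<Rightarrow> 'b) \<Rightarrow> ('r \<Rightarrow> 'b \<Rightarrow> 'b) \<Rightarrow> 'b set \<Rightarrow>
   ('c \<Rightarrow> 'c \<Rightarrow> 'c) \<Rightarrow> ('r \<Rightarrow> 'c \<Rightarrow> 'c) \<Rightarrow> 'c set \<Rightarrow> bool" where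
  "mod_iso add1 s1 S add2 s2 T \<longleftrightarrow>
     (\<exists>f. bij_betw f S T \<and> (\<forall>x\<in>S. \<forall>y\<in>S. f (add1 x y) = add2 (f x) (f y))
          \<and> (\<forall>r. \<forall>x\<in>S. f (s1 r x) = s2 r (f x)))"

text \<open>Direct limit of a nat-indexed direct system of modules C 0 -> C 1 -> ... with transition
  maps phi i : C i -> C (Suc i), all living in a common type 'b with operations add, s.\<close>
fun dl_tr :: "(nat \<Rightarrow> 'b \<Rightarrow> 'b) \<Rightarrow> nat \<Rightarrow> nat \<Rightarrow> 'b \<Rightarrow> 'b" where
  "dl_tr phi i 0 x = x"
| "dl_tr phi i (Suc d) x = phi (i + d) (dl_tr phi i d x)"

definition dl_rel :: "(nat \<Rightarrow> 'b set) \<Rightarrow> (nat \<Rightarrow> 'b \<Rightarrow> 'b) \<Rightarrow> ((nat \<times> 'b) \<times> (nat \<times> 'b)) set" where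
  "dl_rel C phi = {((i, x), (j, y)). x \<in> C i \<and> y \<in> C j \<and>
      (\<exists>n. i \<le> n \<and> j \<le> n \<and> dl_tr phi i (n - i) x = dl_tr phi j (n - j) y)}"

definition dl_carrier :: "(nat \<Rightarrow> 'b set) \<Rightarrow> (nat \<Rightarrow> 'b \<Rightarrow> 'b) \<Rightarrow> (nat \<times> 'b) set set" where
  "dl_carrier C phi = (SIGMA i:UNIV. C i) // dl_rel C phi"

definition dl_add :: "('b \<Rightarrow> 'b \<Rightarrow> 'b) \<Rightarrow> (nat \<Rightarrow> 'b set) \<Rightarrow> (nat \<Rightarrow> 'b \<Rightarrow> 'b)
    \<Rightarrow> (nat \<times> 'b) set \<Rightarrow> (nat \<times> 'b) set \<Rightarrow> (nat \<times> 'b) set" where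
  "dl_add add C phi X Y = (SOME Z. \<exists>i x j y. (i, x) \<in> X \<and> (j, y) \<in> Y \<and>
      Z = dl_rel C phi `` {(max i j, add (dl_tr phi i (max i j - i) x) (dl_tr phi j (max i j - j) y))})"

definition dl_scale :: "('r \<Rightarrow> 'b \<Rightarrow> 'b) \<Rightarrow> (nat \<Rightarrow> 'b set) \<Rightarrow> (nat \<Rightarrow> 'b \<Rightarrow> 'b)
    \<Rightarrow> 'r \<Rightarrow> (nat \<times> 'b) set \<Rightarrow> (nat \<times> 'b) set" where
  "dl_scale s C phi r X = (SOME Z. \<exists>i x. (i, x) \<in> X \<and> Z = dl_rel C phi `` {(i, s r x)})"

text \<open>The direct system k \<mapsto> Hom_R(R/a^k R, M), k = 1, 2, ... (index i stands for k = i+1).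
  The transition map Hom(R/a^k,M) -> Hom(R/a^(k+1),M) is precomposition with the projection
  R/a^(k+1) -> R/a^k, which in the above model of Hom(R/I,M) is the identity on maps R -> M.\<close>
definition HomSys :: "('a::comm_ring_1 \<Rightarrow> 'm::ab_group_add \<Rightarrow> 'm) \<Rightarrow> 'a \<Rightarrow> nat \<Rightarrow> ('a \<Rightarrow> 'm) set" where
  "HomSys scale a i = HomQ scale (pideal (a ^ Suc i))"

definition HomSys_tr :: "nat \<Rightarrow> ('a \<Rightarrow> 'm) \<Rightarrow> ('a \<Rightarrow> 'm)" where
  "HomSys_tr i f = (\<lambda>x. f x)"

definition short_exact :: "'x set \<Rightarrow> 'y::zero set \<Rightarrow> 'z::zero set \<Rightarrow> ('x \<Rightarrow> 'y) \<Rightarrow> ('y \<Rightarrow> 'z) \<Rightarrow> bool" where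
  "short_exact A B C f g \<longleftrightarrow> f ` A \<subseteq> B \<and> g ` B \<subseteq> C \<and> inj_on f A \<and>
     f ` A = {b \<in> B. g b = 0} \<and> g ` B = C"

end

theory Submission
  imports Defs
begin

lemma mult_module: "module ((*) :: 'c::comm_ring_1 \<Rightarrow> 'c \<Rightarrow> 'c)"
  by unfold_locales (auto simp: algebra_simps)

lemma dl_tr_id: "dl_tr HomSys_tr i d x = x"
  by (induction d) (auto simp: HomSys_tr_def)

definition dcls :: "(nat \<Rightarrow> 'b set) \<Rightarrow> 'b \<Rightarrow> (nat \<times> 'b) set" where
  "dcls C g = {(j, g) | j. g \<in> C j}"

lemma rel_img: "dl_rel C HomSys_tr `` {(j, g)} = (if g \<in> C j then dcls C g else {})"
proof (cases "g \<in> C j")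
  case True
  have "((j, g), (j', y)) \<in> dl_rel C HomSys_tr \<longleftrightarrow> (j', y) \<in> dcls C g" for j' y
  proof
    assume "((j, g), (j', y)) \<in> dl_rel C HomSys_tr"
    then show "(j', y) \<in> dcls C g" unfolding dl_rel_def dcls_def by (auto simp: dl_tr_id)
  next
    assume "(j', y) \<in> dcls C g"
    then show "((j, g), (j', y)) \<in> dl_rel C HomSys_tr" using True unfolding dl_rel_def dcls_def
      by (auto simp: dl_tr_id intro!: exI[of _ "max j j'"])
  qed
  then show ?thesis using True by auto
next
  case False
  then show ?thesis unfolding dl_rel_def by auto
qed

lemma carrier_eq: "dl_carrier C HomSys_tr = {dcls C g | g. \<exists>i. g \<in> C i}"
  unfolding dl_carrier_def quotient_def by (auto simp: rel_img) blast+

lemma dcls_mem: "g \<in> C i \<Longrightarrow> (i, g) \<in> dcls C g"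
  unfolding dcls_def by auto

lemma dcls_inj: "g \<in> C i \<Longrightarrow> dcls C g = dcls C h \<Longrightarrow> g = h"
  unfolding dcls_def by auto

lemma dl_scale_cls:
  assumes cl: "\<And>i f r. f \<in> C i \<Longrightarrow> s r f \<in> C i" and f: "f \<in> C i"
  shows "dl_scale s C HomSys_tr r (dcls C f) = dcls C (s r f)"
  unfolding dl_scale_def
proof (rule someI2_ex)
  show "\<exists>Z. \<exists>i' x. (i', x) \<in> dcls C f \<and> Z = dl_rel C HomSys_tr `` {(i', s r x)}"
    using dcls_mem[of f C i] f by blast
next
  fix Z assume "\<exists>i' x. (i', x) \<in> dcls C f \<and> Z = dl_rel C HomSys_tr `` {(i', s r x)}"
  then obtain i' x where "(i', x) \<in> dcls C f" "Z = dl_rel C HomSys_tr `` {(i', s r x)}" by blast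
  then show "Z = dcls C (s r f)" using cl unfolding rel_img by (auto simp: dcls_def)
qed

lemma dl_add_cls:
  assumes mono: "\<And>i j. i \<le> j \<Longrightarrow> C i \<subseteq> C j"
    and cl: "\<And>i f g. f \<in> C i \<Longrightarrow> g \<in> C i \<Longrightarrow> add f g \<in> C i"
    and f: "f \<in> C i" and g: "g \<in> C j"
  shows "dl_add add C HomSys_tr (dcls C f) (dcls C g) = dcls C (add f g)"
  unfolding dl_add_def
proof (rule someI2_ex)
  show "\<exists>Z. \<exists>i x j y. (i, x) \<in> dcls C f \<and> (j, y) \<in> dcls C g \<and>
      Z = dl_rel C HomSys_tr `` {(max i j, add (dl_tr HomSys_tr i (max i j - i) x) (dl_tr HomSys_tr j (max i j - j) y))}"
    using dcls_mem[of f C i] dcls_mem[of g C j] f g by blast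
next
  fix Z assume "\<exists>i x j y. (i, x) \<in> dcls C f \<and> (j, y) \<in> dcls C g \<and>
      Z = dl_rel C HomSys_tr `` {(max i j, add (dl_tr HomSys_tr i (max i j - i) x) (dl_tr HomSys_tr j (max i j - j) y))}"
  then obtain i' x j' y where h: "(i', x) \<in> dcls C f" "(j', y) \<in> dcls C g"
    "Z = dl_rel C HomSys_tr `` {(max i' j', add x y)}" by (auto simp: dl_tr_id)
  then have xy: "x = f" "y = g" "f \<in> C i'" "g \<in> C j'" unfolding dcls_def by auto
  have "f \<in> C (max i' j')" "g \<in> C (max i' j')" using xy mono[of i' "max i' j'"] mono[of j' "max i' j'"] by auto
  then have "add f g \<in> C (max i' j')" using cl by blast
  then show "Z = dcls C (add f g)" using h(3) xy unfolding rel_img by simp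
qed

context module
begin

lemma HomQ_iff: "f \<in> HomQ scale (pideal b) \<longleftrightarrow> (\<exists>m. b *s m = 0 \<and> f = (\<lambda>x. x *s m))"
proof
  assume "f \<in> HomQ scale (pideal b)"
  then have h: "module_hom (*) scale f" and z: "\<forall>x\<in>pideal b. f x = 0" by (auto simp: HomQ_def)
  have fx: "f x = x *s f 1" for x using module_hom.scale[OF h, of x 1] by simp
  have "b \<in> pideal b" unfolding pideal_def by (auto intro: exI[of _ 1])
  then have "b *s f 1 = 0" using z fx by metis
  thus "\<exists>m. b *s m = 0 \<and> f = (\<lambda>x. x *s m)" using fx by blast
next
  assume "\<exists>m. b *s m = 0 \<and> f = (\<lambda>x. x *s m)"
  then obtain m where m: "b *s m = 0" "f = (\<lambda>x. x *s m)" by blast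
  have e: "(b * r) *s m = r *s (b *s m)" for r by (simp add: mult.commute)
  show "f \<in> HomQ scale (pideal b)" unfolding HomQ_def pideal_def
    using m e by (auto simp: module_hom_iff mult_module module_axioms scale_left_distrib)
qed

lemma HomQ_add: "f \<in> HomQ scale (pideal b) \<Longrightarrow> g \<in> HomQ scale (pideal b) \<Longrightarrow> hom_add f g \<in> HomQ scale (pideal b)"
  unfolding HomQ_iff hom_add_def
  by (metis scale_right_distrib add_0_left)

lemma HomQ_scale: "f \<in> HomQ scale (pideal b) \<Longrightarrow> hom_scale scale r f \<in> HomQ scale (pideal b)"
  unfolding HomQ_iff hom_scale_def
proof (elim exE conjE)
  fix m assume m: "b *s m = 0" "f = (\<lambda>x. x *s m)"
  have "b *s r *s m = 0" using m(1) by (metis scale_left_commute scale_zero_right)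
  moreover have "(\<lambda>x. r *s f x) = (\<lambda>x. x *s r *s m)" using m(2) by (auto simp: mult.commute)
  ultimately show "\<exists>m. b *s m = 0 \<and> (\<lambda>x. r *s f x) = (\<lambda>x. x *s m)" by blast
qed

lemma HomQ_mono: assumes "i \<le> j" shows "HomQ scale (pideal (a ^ i)) \<subseteq> HomQ scale (pideal (a ^ j))"
proof
  fix f assume "f \<in> HomQ scale (pideal (a ^ i))"
  then obtain m where m: "a ^ i *s m = 0" "f = (\<lambda>x. x *s m)" unfolding HomQ_iff by blast
  have "a ^ j *s m = 0" using m(1) assms
    by (metis le_add_diff_inverse2 power_add scale_scale scale_zero_right)
  then show "f \<in> HomQ scale (pideal (a ^ j))" using m(2) unfolding HomQ_iff by blast
qed

lemma HomQ_kill: "f \<in> HomQ scale (pideal b) \<Longrightarrow> hom_scale scale b f = (\<lambda>x. 0)"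
proof -
  assume "f \<in> HomQ scale (pideal b)"
  then obtain m where m: "b *s m = 0" "f = (\<lambda>x. x *s m)" unfolding HomQ_iff by blast
  have "b *s x *s m = 0" for x using m(1) by (metis scale_left_commute scale_zero_right)
  then show ?thesis unfolding hom_scale_def m(2) by simp
qed

lemma ann_Gamma: "ann scale a \<subseteq> Gamma scale a"
  unfolding ann_def Gamma_def by (auto intro: exI[of _ 1])

lemma red_ann: "reduced scale \<Longrightarrow> a ^ Suc k *s m = 0 \<Longrightarrow> a *s m = 0"
proof (induction k arbitrary: m)
  case 0 then show ?case by simp
next
  case (Suc k)
  have "a ^ 2 *s (a ^ k *s m) = 0" using Suc.prems(2)
    by (simp add: power_add[symmetric] algebra_simps power2_eq_square)
  then have "a *s (a ^ k *s m) = 0" using Suc.prems(1) unfolding reduced_def a_reduced_def by blast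
  then have "a ^ Suc k *s m = 0" by simp
  then show ?case using Suc by blast
qed

lemma red_iff_Gamma: "reduced scale \<longleftrightarrow> (\<forall>a. Gamma scale a \<subseteq> ann scale a)"
proof
  assume r: "reduced scale"
  show "\<forall>a. Gamma scale a \<subseteq> ann scale a"
  proof (clarify)
    fix a m assume "m \<in> Gamma scale a"
    then obtain k where "k > 0" "a ^ k *s m = 0" unfolding Gamma_def by blast
    then obtain j where "a ^ Suc j *s m = 0" by (metis Suc_pred)
    then show "m \<in> ann scale a" using red_ann[OF r] unfolding ann_def by blast
  qed
next
  assume h: "\<forall>a. Gamma scale a \<subseteq> ann scale a"
  show "reduced scale" unfolding reduced_def a_reduced_def
  proof (clarify)
    fix a m assume "a ^ 2 *s m = 0"
    then have "m \<in> Gamma scale a" unfolding Gamma_def by (auto intro: exI[of _ 2])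
    then show "a *s m = 0" using h unfolding ann_def by blast
  qed
qed


lemma zero_Gamma: "0 \<in> Gamma scale a"
  unfolding Gamma_def by (auto intro: exI[of _ 1])

lemma zero_HomQ: "(\<lambda>x. 0) \<in> HomQ scale (pideal b)"
  unfolding HomQ_iff by (rule exI[of _ 0]) simp

lemma HomSys_mono: "i \<le> j \<Longrightarrow> HomSys scale a i \<subseteq> HomSys scale a j"
  unfolding HomSys_def by (rule HomQ_mono) simp

lemma HomSys_red: "reduced scale \<Longrightarrow> HomSys scale a i = HomQ scale (pideal a)"
proof -
  assume r: "reduced scale"
  have "a ^ Suc i *s m = 0 \<longleftrightarrow> a *s m = 0" for m
  proof
    assume "a *s m = 0" then show "a ^ Suc i *s m = 0"
      by (metis mult.commute power_Suc scale_scale scale_zero_right)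
  qed (rule red_ann[OF r])
  then show ?thesis unfolding HomSys_def set_eq_iff HomQ_iff by auto
qed

lemma L4_fwd:
  assumes r: "reduced scale"
  shows "mod_iso (dl_add hom_add (HomSys scale a) HomSys_tr)
              (dl_scale (hom_scale scale) (HomSys scale a) HomSys_tr)
              (dl_carrier (HomSys scale a) HomSys_tr)
              hom_add (hom_scale scale) (HomQ scale (pideal a))"
proof -
  define C where "C = HomSys scale a"
  define H where "H = HomQ scale (pideal a)"
  have CH: "C i = H" for i unfolding C_def H_def using HomSys_red[OF r] by blast
  have car: "dl_carrier C HomSys_tr = dcls C ` H" unfolding carrier_eq CH by auto
  define F where "F X = snd (SOME p. p \<in> X)" for X :: "(nat \<times> ('a \<Rightarrow> 'b)) set"
  have Fc: "F (dcls C g) = g" if "g \<in> H" for g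
  proof -
    have "(0, g) \<in> dcls C g" using that CH by (intro dcls_mem) auto
    then have "(SOME p. p \<in> dcls C g) \<in> dcls C g" by (rule someI)
    then show ?thesis unfolding F_def dcls_def by auto
  qed
  have mono: "\<And>i j. i \<le> j \<Longrightarrow> C i \<subseteq> C j" using CH by auto
  have cla: "\<And>i f g. f \<in> C i \<Longrightarrow> g \<in> C i \<Longrightarrow> hom_add f g \<in> C i"
    using CH HomQ_add H_def by auto
  have cls: "\<And>i f r. f \<in> C i \<Longrightarrow> hom_scale scale r f \<in> C i"
    using CH HomQ_scale H_def by auto
  have "bij_betw F (dcls C ` H) H"
    unfolding bij_betw_def inj_on_def using Fc by (auto simp: image_iff)
  moreover have "\<forall>x\<in>dcls C ` H. \<forall>y\<in>dcls C ` H. F (dl_add hom_add C HomSys_tr x y) = hom_add (F x) (F y)"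
  proof (clarify)
    fix f g assume "f \<in> H" "g \<in> H"
    then show "F (dl_add hom_add C HomSys_tr (dcls C f) (dcls C g)) = hom_add (F (dcls C f)) (F (dcls C g))"
      using dl_add_cls[where C=C and add=hom_add and f=f and i=0 and g=g and j=0, OF mono cla] CH Fc cla by auto
  qed
  moreover have "\<forall>r. \<forall>x\<in>dcls C ` H. F (dl_scale (hom_scale scale) C HomSys_tr r x) = hom_scale scale r (F x)"
  proof (clarify)
    fix r f assume "f \<in> H"
    then show "F (dl_scale (hom_scale scale) C HomSys_tr r (dcls C f)) = hom_scale scale r (F (dcls C f))"
      using dl_scale_cls[where C=C and s="hom_scale scale" and f=f and i=0 and r=r, OF cls] CH Fc cls by auto
  qed
  ultimately show ?thesis unfolding mod_iso_def C_def[symmetric] H_def[symmetric] car by blast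
qed

lemma L4_bwd:
  assumes iso: "mod_iso (dl_add hom_add (HomSys scale a) HomSys_tr)
              (dl_scale (hom_scale scale) (HomSys scale a) HomSys_tr)
              (dl_carrier (HomSys scale a) HomSys_tr)
              hom_add (hom_scale scale) (HomQ scale (pideal a))"
  shows "a_reduced scale a"
proof -
  define C where "C = HomSys scale a"
  define H where "H = HomQ scale (pideal a)"
  obtain F where bij: "bij_betw F (dl_carrier C HomSys_tr) H"
    and sc: "\<forall>r. \<forall>x\<in>dl_carrier C HomSys_tr. F (dl_scale (hom_scale scale) C HomSys_tr r x) = hom_scale scale r (F x)"
    using iso unfolding mod_iso_def C_def H_def by blast
  have cls: "\<And>i f r. f \<in> C i \<Longrightarrow> hom_scale scale r f \<in> C i"
    unfolding C_def HomSys_def using HomQ_scale by blast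
  show ?thesis unfolding a_reduced_def
  proof (clarify)
    fix m assume m: "a ^ 2 *s m = 0"
    define f where "f = (\<lambda>x. x *s m)"
    have fC: "f \<in> C 1" unfolding C_def HomSys_def HomQ_iff f_def using m
      by (auto simp: numeral_2_eq_2)
    have zC: "(\<lambda>x. 0) \<in> C 1" unfolding C_def HomSys_def by (rule zero_HomQ)
    have X: "dcls C f \<in> dl_carrier C HomSys_tr" unfolding carrier_eq using fC by blast
    have FX: "F (dcls C f) \<in> H" using bij X by (meson bij_betw_apply)
    have e1: "dl_scale (hom_scale scale) C HomSys_tr a (dcls C f) = dcls C (hom_scale scale a f)"
      by (rule dl_scale_cls[where C=C and s="hom_scale scale" and i=1, OF cls fC])
    have e0: "dl_scale (hom_scale scale) C HomSys_tr 0 (dcls C f) = dcls C (\<lambda>x. 0)"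
      using dl_scale_cls[where C=C and s="hom_scale scale" and i=1 and r=0, OF cls fC] by (simp add: hom_scale_def)
    have "F (dcls C (hom_scale scale a f)) = (\<lambda>x. 0)"
      using sc X e1 HomQ_kill[of "F (dcls C f)" a] FX H_def by metis
    moreover have "F (dcls C (\<lambda>x. 0)) = (\<lambda>x. 0)"
      using sc X e0 by (metis hom_scale_def scale_zero_left)
    moreover have "dcls C (hom_scale scale a f) \<in> dl_carrier C HomSys_tr"
      unfolding carrier_eq using cls[OF fC] by blast
    moreover have "dcls C (\<lambda>x. 0) \<in> dl_carrier C HomSys_tr"
      unfolding carrier_eq using zC by blast
    ultimately have "dcls C (hom_scale scale a f) = dcls C (\<lambda>x. 0)"
      using bij unfolding bij_betw_def inj_on_def by metis
    then have "hom_scale scale a f = (\<lambda>x. 0)" using dcls_inj cls[OF fC] by metis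
    then have "hom_scale scale a f 1 = 0" by simp
    then show "a *s m = 0" unfolding hom_scale_def f_def by simp
  qed
qed

lemma I5_fwd:
  assumes r: "reduced scale"
  shows "mod_iso (+) scale (Gamma scale a) hom_add (hom_scale scale) (HomQ scale (pideal a))"
proof -
  have G: "Gamma scale a = ann scale a" using red_iff_Gamma r ann_Gamma by blast
  define F where "F m = (\<lambda>x::'a. x *s m)" for m
  have "bij_betw F (ann scale a) (HomQ scale (pideal a))"
    unfolding bij_betw_def inj_on_def
  proof (intro conjI ballI impI)
    fix x y assume "F x = F y" then have "F x 1 = F y 1" by simp
    then show "x = y" unfolding F_def by simp
  next
    show "F ` ann scale a = HomQ scale (pideal a)"
      unfolding set_eq_iff image_iff HomQ_iff ann_def F_def by auto
  qed
  moreover have "\<forall>x\<in>ann scale a. \<forall>y\<in>ann scale a. F (x + y) = hom_add (F x) (F y)"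
    unfolding F_def hom_add_def by (simp add: scale_right_distrib)
  moreover have "\<forall>r. \<forall>x\<in>ann scale a. F (r *s x) = hom_scale scale r (F x)"
    unfolding F_def hom_scale_def by (simp add: mult.commute)
  ultimately show ?thesis unfolding mod_iso_def G by blast
qed

lemma I5_bwd:
  assumes iso: "mod_iso (+) scale (Gamma scale a) hom_add (hom_scale scale) (HomQ scale (pideal a))"
  shows "Gamma scale a \<subseteq> ann scale a"
proof
  fix m assume m: "m \<in> Gamma scale a"
  obtain F where bij: "bij_betw F (Gamma scale a) (HomQ scale (pideal a))"
    and sc: "\<forall>r. \<forall>x\<in>Gamma scale a. F (r *s x) = hom_scale scale r (F x)"
    using iso unfolding mod_iso_def by blast
  obtain k where k: "k > 0" "a ^ k *s m = 0" using m unfolding Gamma_def by blast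
  have "a ^ k *s (a *s m) = 0" using k(2) by (metis scale_left_commute scale_zero_right)
  then have am: "a *s m \<in> Gamma scale a" unfolding Gamma_def using k(1) by blast
  have Fm: "F m \<in> HomQ scale (pideal a)" using bij m by (meson bij_betw_apply)
  have "F (a *s m) = (\<lambda>x. 0)" using sc m HomQ_kill[OF Fm] by metis
  moreover have "F 0 = (\<lambda>x. 0)" using sc m
    by (metis hom_scale_def scale_zero_left)
  ultimately have "a *s m = 0" using bij am zero_Gamma unfolding bij_betw_def inj_on_def by metis
  then show "m \<in> ann scale a" unfolding ann_def by simp
qed

lemma G2_iff: "(\<forall>a. smul_set scale a (Gamma scale a) = {0}) \<longleftrightarrow> (\<forall>a. Gamma scale a \<subseteq> ann scale a)"
proof
  assume h: "\<forall>a. smul_set scale a (Gamma scale a) = {0}"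
  show "\<forall>a. Gamma scale a \<subseteq> ann scale a"
  proof (intro allI subsetI)
    fix a m assume "m \<in> Gamma scale a"
    then have "a *s m \<in> smul_set scale a (Gamma scale a)" unfolding smul_set_def by blast
    then show "m \<in> ann scale a" using h unfolding ann_def by blast
  qed
next
  assume h: "\<forall>a. Gamma scale a \<subseteq> ann scale a"
  show "\<forall>a. smul_set scale a (Gamma scale a) = {0}"
  proof
    fix a
    have "smul_set scale a (Gamma scale a) \<subseteq> {0}" using h unfolding smul_set_def ann_def by blast
    moreover have "a *s 0 \<in> smul_set scale a (Gamma scale a)" unfolding smul_set_def using zero_Gamma by blast
    ultimately show "smul_set scale a (Gamma scale a) = {0}" by auto
  qed
qed

lemma A3_iff: "reduced scale \<longleftrightarrow> (\<forall>a. \<forall>k::nat. k > 0 \<longrightarrow> ann scale a = ann scale (a ^ k))"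
proof
  assume r: "reduced scale"
  show "\<forall>a. \<forall>k::nat. k > 0 \<longrightarrow> ann scale a = ann scale (a ^ k)"
  proof (intro allI impI)
    fix a and k :: nat assume "k > 0"
    then obtain j where j: "k = Suc j" by (metis Suc_pred)
    have "a ^ Suc j *s m = 0 \<longleftrightarrow> a *s m = 0" for m
    proof
      assume "a *s m = 0" then show "a ^ Suc j *s m = 0"
        by (metis mult.commute power_Suc scale_scale scale_zero_right)
    qed (rule red_ann[OF r])
    then show "ann scale a = ann scale (a ^ k)" unfolding ann_def j by blast
  qed
next
  assume h: "\<forall>a. \<forall>k::nat. k > 0 \<longrightarrow> ann scale a = ann scale (a ^ k)"
  show "reduced scale" unfolding reduced_def a_reduced_def
  proof (intro allI impI)
    fix a m assume "a ^ 2 *s m = 0"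
    then show "a *s m = 0" using h[rule_format, of 2 a] unfolding ann_def by auto
  qed
qed

lemma S6_iff: "short_exact (Gamma scale a) (UNIV :: 'b set) (smul_set scale a UNIV) (\<lambda>m. m) (\<lambda>m. a *s m)
   \<longleftrightarrow> Gamma scale a \<subseteq> ann scale a"
  unfolding short_exact_def smul_set_def using ann_Gamma[of a] unfolding ann_def by auto

end

theorem mainTheorem2:
  fixes scale :: "'a::comm_ring_1 \<Rightarrow> 'm::ab_group_add \<Rightarrow> 'm"
  assumes "module scale"
  shows "(reduced scale \<longleftrightarrow> (\<forall>a. smul_set scale a (Gamma scale a) = {0}))
       \<and> (reduced scale \<longleftrightarrow> (\<forall>a. \<forall>k::nat. k > 0 \<longrightarrow> ann scale a = ann scale (a ^ k)))
       \<and> (reduced scale \<longleftrightarrow> (\<forall>a. mod_iso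
              (dl_add hom_add (HomSys scale a) HomSys_tr)
              (dl_scale (hom_scale scale) (HomSys scale a) HomSys_tr)
              (dl_carrier (HomSys scale a) HomSys_tr)
              hom_add (hom_scale scale) (HomQ scale (pideal a))))
       \<and> (reduced scale \<longleftrightarrow> (\<forall>a. mod_iso (+) scale (Gamma scale a)
              hom_add (hom_scale scale) (HomQ scale (pideal a))))
       \<and> (reduced scale \<longleftrightarrow> (\<forall>a. short_exact (Gamma scale a) (UNIV :: 'm set)
              (smul_set scale a UNIV) (\<lambda>m. m) (\<lambda>m. scale a m)))"
proof -
  interpret module scale by fact
  have P: "reduced scale \<longleftrightarrow> (\<forall>a. Gamma scale a \<subseteq> ann scale a)" by (rule red_iff_Gamma)
  have c4: "reduced scale \<longleftrightarrow> (\<forall>a. mod_iso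
              (dl_add hom_add (HomSys scale a) HomSys_tr)
              (dl_scale (hom_scale scale) (HomSys scale a) HomSys_tr)
              (dl_carrier (HomSys scale a) HomSys_tr)
              hom_add (hom_scale scale) (HomQ scale (pideal a)))"
  proof
    assume "reduced scale" then show "\<forall>a. mod_iso
              (dl_add hom_add (HomSys scale a) HomSys_tr)
              (dl_scale (hom_scale scale) (HomSys scale a) HomSys_tr)
              (dl_carrier (HomSys scale a) HomSys_tr)
              hom_add (hom_scale scale) (HomQ scale (pideal a))" using L4_fwd by blast
  next
    assume h: "\<forall>a. mod_iso
              (dl_add hom_add (HomSys scale a) HomSys_tr)
              (dl_scale (hom_scale scale) (HomSys scale a) HomSys_tr)
              (dl_carrier (HomSys scale a) HomSys_tr)
              hom_add (hom_scale scale) (HomQ scale (pideal a))"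
    show "reduced scale" unfolding reduced_def
    proof
      fix a show "a_reduced scale a" using h L4_bwd by blast
    qed
  qed
  have c5: "reduced scale \<longleftrightarrow> (\<forall>a. mod_iso (+) scale (Gamma scale a)
              hom_add (hom_scale scale) (HomQ scale (pideal a)))"
  proof
    assume "reduced scale" then show "\<forall>a. mod_iso (+) scale (Gamma scale a)
              hom_add (hom_scale scale) (HomQ scale (pideal a))" using I5_fwd by blast
  next
    assume h: "\<forall>a. mod_iso (+) scale (Gamma scale a)
              hom_add (hom_scale scale) (HomQ scale (pideal a))"
    then have "\<forall>a. Gamma scale a \<subseteq> ann scale a" using I5_bwd by blast
    then show "reduced scale" using P by blast
  qed
  have c6: "reduced scale \<longleftrightarrow> (\<forall>a. short_exact (Gamma scale a) (UNIV :: 'm set)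
              (smul_set scale a UNIV) (\<lambda>m. m) (\<lambda>m. scale a m))"
    using P S6_iff by blast
  have c2: "reduced scale \<longleftrightarrow> (\<forall>a. smul_set scale a (Gamma scale a) = {0})"
    using P G2_iff by blast
  show ?thesis using c2 A3_iff c4 c5 c6 by blast
qed

end
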